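(* Let $m,k\in\mathbb{N}$, let $\beta,\mu\in\mathbb{C}$ with $\frac{1+\beta}{2}-m\notin\mathbb{Z}_0^-$, $\Re(\beta)>0$ and $\Re(\mu)>0$. Then \[ \int_0^\infty t^{\beta-1}e^{-\mu t}\,{}_2F_2\left[\begin{array}{r} -2m,\ -m-k-\tfrac{1}{2};\\ -2m-2k-1,\ \tfrac{1+\beta}{2}-m;\end{array}\mu t\right]_{2m} dt=\frac{\Gamma(\beta)}{\mu^{\beta}}\frac{\left(\frac{1}{2}\right)_m\left(\frac{2+\beta+2k}{2}\right)_m}{\left(\frac{1-\beta}{2}\right)_m\left(1+k\right)_m}. \]
   Context: $\mathbb{N}=\{1,2,3,\dots\}$, $\mathbb{Z}_0^-=\{0,-1,-2,\dots\}$. For $a\in\mathbb{C}$ and $n\in\mathbb{N}_0$, $(a)_0=1$ and $(a)_n=a(a+1)\cdots(a+n-1)$. For $N\in\mathbb{N}_0$, the truncated series is ${}_2F_2\left[\begin{array}{r} a_1,a_2;\\ b_1,b_2;\end{array}z\right]_N=\sum_{n=0}^{N}\frac{(a_1)_n(a_2)_n}{(b_1)_n(b_2)_n}\frac{z^n}{n!}$ (first $N+1$ terms). The left side is the Mellin transform $\int_0^\infty t^{s-1}f(t)\,dt$ at $s=\beta$; $\mu^{\beta}$ denotes the principal power. *)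

theory Defs
  imports "HOL-Analysis.Analysis"
begin

definition hyp2F2_trunc :: "complex \<Rightarrow> complex \<Rightarrow> complex \<Rightarrow> complex \<Rightarrow> complex \<Rightarrow> nat \<Rightarrow> complex" where
  "hyp2F2_trunc a1 a2 b1 b2 z N =
     (\<Sum>n\<le>N. (pochhammer a1 n * pochhammer a2 n) / (pochhammer b1 n * pochhammer b2 n)
              * z ^ n / of_nat (fact n))"

end

theory Submission
  imports Defs
begin


definition wt :: "nat \<Rightarrow> complex \<Rightarrow> nat \<Rightarrow> nat \<Rightarrow> complex" where
  "wt k b m n = pochhammer (- 2 * of_nat m) n * pochhammer (- of_nat m - of_nat k - 1/2) n * pochhammer b n /
     (pochhammer (- 2 * of_nat m - 2 * of_nat k - 1) n * pochhammer ((1 + b) / 2 - of_nat m) n * of_nat (fact n))"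

lemma poch_sh1: "pochhammer (a::'a::comm_ring_1) n * (a - 1) = pochhammer (a - 1) n * (a - 1 + of_nat n)"
proof -
  have "pochhammer (a - 1) (Suc n) = (a - 1) * pochhammer (a - 1 + 1) n" by (rule pochhammer_rec)
  moreover have "pochhammer (a - 1) (Suc n) = (a - 1 + of_nat n) * pochhammer (a - 1) n" by (rule pochhammer_rec')
  ultimately show ?thesis by (simp add: mult.commute)
qed

lemma poch_sh2: "pochhammer (a::'a::comm_ring_1) n * ((a - 2) * (a - 1)) = pochhammer (a - 2) n * ((a - 2 + of_nat n) * (a - 1 + of_nat n))"
proof -
  have 1: "pochhammer (a - 1) n * (a - 2) = pochhammer (a - 2) n * (a - 2 + of_nat n)"
    using poch_sh1[of "a - 1" n] by (simp add: algebra_simps)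
  have "pochhammer a n * ((a - 2) * (a - 1)) = (pochhammer a n * (a - 1)) * (a - 2)" by (simp add: algebra_simps)
  also have "\<dots> = (pochhammer (a - 1) n * (a - 1 + of_nat n)) * (a - 2)" by (simp only: poch_sh1)
  also have "\<dots> = (pochhammer (a - 1) n * (a - 2)) * (a - 1 + of_nat n)" by (simp only: mult_ac)
  also have "\<dots> = pochhammer (a - 2) n * ((a - 2 + of_nat n) * (a - 1 + of_nat n))" by (simp only: 1 mult_ac)
  finally show ?thesis .
qed

lemma poch_nz_nonpos: "z \<notin> \<int>\<^sub>\<le>\<^sub>0 \<Longrightarrow> pochhammer (z::complex) n \<noteq> 0"
  by (auto simp: pochhammer_eq_0_iff)

lemma poch_nz_neg: "n \<le> j \<Longrightarrow> pochhammer (- of_nat j :: complex) n \<noteq> 0"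
  by (auto simp: pochhammer_eq_0_iff)

lemma wt_zero: "2*m < n \<Longrightarrow> wt k b m n = 0"
proof -
  assume "2*m < n"
  hence "pochhammer (- 2 * of_nat m :: complex) n = 0"
    by (auto simp: pochhammer_eq_0_iff intro!: exI[of _ "2*m"])
  thus ?thesis by (simp add: wt_def)
qed

lemma wt_Suc_form:
  "wt k b (Suc m) n = pochhammer (- 2 * of_nat m - 2) n * pochhammer (- of_nat m - of_nat k - 3/2) n * pochhammer b n /
     (pochhammer (- 2 * of_nat m - 2 * of_nat k - 3) n * pochhammer ((1 + b) / 2 - of_nat m - 1) n * of_nat (fact n))"
proof -
  have e: "- 2 * of_nat (Suc m) = (- 2 * of_nat m - 2 :: complex)"
     "- of_nat (Suc m) - of_nat k - 1/2 = (- of_nat m - of_nat k - 3/2 :: complex)"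
     "- 2 * of_nat m - 2 - 2 * of_nat k - 1 = (- 2 * of_nat m - 2 * of_nat k - 3 :: complex)"
     "(1 + b) / 2 - of_nat (Suc m) = (1 + b) / 2 - of_nat m - 1"
    by (simp_all add: algebra_simps)
  show ?thesis unfolding wt_def e(1) e(2) e(4) e(3) ..
qed

lemma combine:
  fixes T W0 W1 A B R0 R1 D X0 X1 X2 X3 C :: complex
  assumes "D \<noteq> 0"
    and "B * W0 * D = C * X1 * T"
    and "R1 * W1 * D = C * X2 * T"
    and "R0 * T * D = C * X3 * T"
    and "A * D = C * X0"
    and "X0 - X1 = X2 - X3"
  shows "A*T - B*W0 = R1*W1 - R0*T"
proof -
  have "(A*T - B*W0) * D = (A*D)*T - B*W0*D" by (simp add: algebra_simps)
  also have "\<dots> = C*T*(X0 - X1)" using assms(2,5) by (simp add: algebra_simps)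
  also have "\<dots> = C*T*(X2 - X3)" using assms(6) by simp
  also have "\<dots> = R1*W1*D - R0*T*D" using assms(3,4) by (simp add: algebra_simps)
  also have "\<dots> = (R1*W1 - R0*T) * D" by (simp add: algebra_simps)
  finally show ?thesis using assms(1) by simp
qed

lemma polyE: fixes M K N y :: complex
  shows "4*(M+1)*(N-2*(M+K)-3)*(N-2*(M+K)-2)*(N-y) - (2*(M+1-y)+2*(M+K)+1)*(N-2*M-2)*(N-2*M-1)*(2*N-2*(M+K)-3)
   = -(2*N-4*M-2*K-3)*(N-2*M-2)*(2*N-2*(M+K)-3)*(2*(M+1-y)-1+N) + 2*N*(2*N-4*M-2*K-5)*(N-2*(M+K)-2)*(N-y)"
  by algebra

definition AA :: "nat \<Rightarrow> complex \<Rightarrow> nat \<Rightarrow> complex" where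
  "AA k b m = ((1 - b)/2 + of_nat m) * (1 + of_nat k + of_nat m)"
definition BB :: "nat \<Rightarrow> complex \<Rightarrow> nat \<Rightarrow> complex" where
  "BB k b m = (1/2 + of_nat m) * (b/2 + 1 + of_nat k + of_nat m)"
definition RR :: "nat \<Rightarrow> complex \<Rightarrow> nat \<Rightarrow> nat \<Rightarrow> complex" where
  "RR k b m n = - of_nat n * AA k b m * (2 * of_nat n - 4 * of_nat m - 2 * of_nat k - 5) /
     (2 * (of_nat m + 1) * (of_nat n - 2 * (of_nat m + of_nat k) - 3))"

lemma ratio_ii:
  fixes P0 P1 Pb Q1 Q2 F P0' P1' Q1' Q2' m1 m2 nu nv w s l1 p q y z :: complex
  assumes nz: "Q1' \<noteq> 0" "Q2' \<noteq> 0" "F \<noteq> 0" "m1 \<noteq> 0" "m2 \<noteq> 0" "s \<noteq> 0" "l1 \<noteq> 0" "y \<noteq> 0" "p \<noteq> 0" "q \<noteq> 0" "z \<noteq> 0"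
  and r0: "P0 * (2*m1*m2) = P0' * (nu*nv)"
  and r1: "P1 * s = P1' * (-w)"
  and r2: "Q1 * (s*(2*l1)) = Q1' * (p*q)"
  and r3: "Q2 * y = Q2' * (-z)"
  shows "(P0*P1*Pb/(Q1*Q2*F)) * (m1*m2*p*q*z) = (P0'*P1'*Pb/(Q1'*Q2'*F)) * (nu*nv*w*l1*y)"
proof -
  have e0: "P0 = P0' * (nu*nv) / (2*m1*m2)" using r0 nz by (simp add: field_simps)
  have e1: "P1 = P1' * (-w) / s" using r1 nz by (simp add: field_simps)
  have e2: "Q1 = Q1' * (p*q) / (s*(2*l1))" using r2 nz by (simp add: field_simps)
  have e3: "Q2 = Q2' * (-z) / y" using r3 nz by (simp add: field_simps)
  show ?thesis unfolding e0 e1 e2 e3 using nz by (simp add: field_simps)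
qed

lemma ratio_i:
  fixes A1 A2 A3 B1 B2 B3 u w c p z e :: complex
  assumes "p \<noteq> 0" "z \<noteq> 0" "e \<noteq> 0"
  shows "(A1*u)*(A2*(w/2))*(A3*c)/((B1*p)*(B2*z)*(B3*e)) * (2*p*z*e) = (A1*A2*A3/(B1*B2*B3)) * (u*w*c)"
  using assms by (simp add: field_simps)

lemma wz_point:
  fixes k m n :: nat and b :: complex
  assumes k: "k \<ge> 1" and n: "n \<le> 2*m+2" and hx: "(1+b)/2 - of_nat (Suc m) \<notin> \<int>\<^sub>\<le>\<^sub>0"
  shows "AA k b m * wt k b (Suc m) n - BB k b m * wt k b m n =
         RR k b m (Suc n) * wt k b (Suc m) (Suc n) - RR k b m n * wt k b (Suc m) n"
proof -
  define M K N :: complex where "M = of_nat m" and "K = of_nat k" and "N = of_nat n"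
  define x where "x = (1+b)/2"
  define y L where "y = M + 1 - x" and "L = M + K"
  define p q z w where "p = N - 2*L - 3" and "q = N - 2*L - 2" and "z = N - y" and "w = 2*N - 2*L - 3"
  define m1 m2 s l1 nu nv where "m1 = M + 1" and "m2 = 2*M + 1" and "s = 2*L+3" and "l1 = L + 1"
     and "nu = N - 2*M - 2" and "nv = N - 2*M - 1"
  define P0' P1' Pb Q1' Q2' F where "P0' = pochhammer (- 2 * M - 2) n" and "P1' = pochhammer (- M - K - 3/2) n"
    and "Pb = pochhammer b n" and "Q1' = pochhammer (- 2 * M - 2 * K - 3) n" and "Q2' = pochhammer (x - M - 1) n"
    and "F = (of_nat (fact n) :: complex)"
  define P0 P1 Q1 Q2 where "P0 = pochhammer (- 2 * M) n" and "P1 = pochhammer (- M - K - 1/2) n"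
    and "Q1 = pochhammer (- 2 * M - 2 * K - 1) n" and "Q2 = pochhammer (x - M) n"
  define T W0 W1 where "T = wt k b (Suc m) n" and "W0 = wt k b m n" and "W1 = wt k b (Suc m) (Suc n)"
  have hx': "x - M - 1 \<notin> \<int>\<^sub>\<le>\<^sub>0" using hx unfolding x_def M_def by (simp add: algebra_simps)
  have T: "T = P0'*P1'*Pb/(Q1'*Q2'*F)"
    unfolding T_def wt_Suc_form P0'_def P1'_def Pb_def Q1'_def Q2'_def F_def M_def K_def x_def ..
  have W0: "W0 = P0*P1*Pb/(Q1*Q2*F)"
    unfolding W0_def wt_def P0_def P1_def Pb_def Q1_def Q2_def F_def M_def K_def x_def ..
  have sN: "(of_nat (Suc n) :: complex) = N + 1" unfolding N_def by simp
  have W1: "W1 = (P0'*nu) * (P1'*(w/2)) * (Pb*(b+N)) / ((Q1'*p)*(Q2'*z)*(F*(N+1)))"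
  proof -
    have "W1 = pochhammer (- 2 * M - 2) (Suc n) * pochhammer (- M - K - 3/2) (Suc n) * pochhammer b (Suc n) /
     (pochhammer (- 2 * M - 2 * K - 3) (Suc n) * pochhammer (x - M - 1) (Suc n) * of_nat (fact (Suc n)))"
      unfolding W1_def wt_Suc_form M_def K_def x_def ..
    also have "\<dots> = ((- 2 * M - 2 + N) * P0') * ((- M - K - 3/2 + N) * P1') * ((b + N) * Pb) /
       (((- 2 * M - 2 * K - 3 + N) * Q1') * ((x - M - 1 + N) * Q2') * ((N + 1) * F))"
      unfolding pochhammer_rec' fact_Suc of_nat_mult of_nat_id sN P0'_def P1'_def Pb_def Q1'_def Q2'_def F_def N_def
      by (simp only: mult_ac)
    also have "\<dots> = (P0'*nu) * (P1'*(w/2)) * (Pb*(b+N)) / ((Q1'*p)*(Q2'*z)*(F*(N+1)))"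
    proof -
      have f: "- 2 * M - 2 + N = nu" "- M - K - 3/2 + N = w/2" "- 2 * M - 2 * K - 3 + N = p"
        "x - M - 1 + N = z"
        unfolding nu_def w_def p_def z_def y_def L_def by (simp_all add: field_simps)
      show ?thesis unfolding f by (simp only: mult_ac)
    qed
    finally show ?thesis .
  qed
  have mNZ: "m1 \<noteq> 0" "m2 \<noteq> 0" "s \<noteq> 0" "l1 \<noteq> 0" "N + 1 \<noteq> 0"
  proof -
    have "m1 = of_nat (Suc m)" unfolding m1_def M_def by simp
    thus "m1 \<noteq> 0" by (metis of_nat_eq_0_iff nat.distinct(1))
    have "m2 = of_nat (Suc (2*m))" unfolding m2_def M_def by simp
    thus "m2 \<noteq> 0" by (metis of_nat_eq_0_iff nat.distinct(1))
    have "s = of_nat (Suc (2*m+2*k+2))" unfolding s_def L_def M_def K_def by simp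
    thus "s \<noteq> 0" by (metis of_nat_eq_0_iff nat.distinct(1))
    have "l1 = of_nat (Suc (m+k))" unfolding l1_def L_def M_def K_def by simp
    thus "l1 \<noteq> 0" by (metis of_nat_eq_0_iff nat.distinct(1))
    have "N + 1 = of_nat (Suc n)" unfolding N_def by simp
    thus "N + 1 \<noteq> 0" by (metis of_nat_eq_0_iff nat.distinct(1))
  qed
  have Q1'nz: "Q1' \<noteq> 0"
  proof -
    have "- 2 * M - 2 * K - 3 = - of_nat (2*m+2*k+3)" unfolding M_def K_def by simp
    thus ?thesis unfolding Q1'_def using poch_nz_neg[of n "2*m+2*k+3"] n by simp
  qed
  have Q2'nz: "Q2' \<noteq> 0" unfolding Q2'_def using poch_nz_nonpos[OF hx'] .
  have Fnz: "F \<noteq> 0" unfolding F_def by simp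
  have ynz: "y \<noteq> 0"
  proof
    assume "y = 0"
    hence "x - M - 1 = 0" unfolding y_def by (simp add: algebra_simps)
    with hx' show False by simp
  qed
  have znz: "z \<noteq> 0"
  proof
    assume "z = 0"
    hence "(x - M - 1) + of_nat n = 0" unfolding z_def y_def N_def by (simp add: algebra_simps)
    from plus_of_nat_eq_0_imp[OF this] hx' show False by simp
  qed
  have pnz: "p \<noteq> 0"
  proof
    assume "p = 0"
    hence "(of_nat n :: complex) = of_nat (2*m+2*k+3)" unfolding p_def L_def N_def M_def K_def by (simp add: algebra_simps)
    hence "n = 2*m+2*k+3" by (simp only: of_nat_eq_iff)
    with n show False by simp
  qed
  have qnz: "q \<noteq> 0"
  proof
    assume "q = 0"
    hence "(of_nat n :: complex) = of_nat (2*m+2*k+2)" unfolding q_def L_def N_def M_def K_def by (simp add: algebra_simps)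
    hence "n = 2*m+2*k+2" by (simp only: of_nat_eq_iff)
    with n k show False by simp
  qed
  have r0: "P0 * (2*m1*m2) = P0' * (nu*nv)"
  proof -
    have "P0 * ((- 2 * M - 2) * (- 2 * M - 1)) = P0' * ((- 2 * M - 2 + N) * (- 2 * M - 1 + N))"
      using poch_sh2[of "- 2 * M" n] unfolding P0_def P0'_def N_def .
    moreover have "(- 2 * M - 2) * (- 2 * M - 1) = 2*m1*m2" unfolding m1_def m2_def by (simp add: algebra_simps)
    moreover have "(- 2 * M - 2 + N) * (- 2 * M - 1 + N) = nu*nv" unfolding nu_def nv_def by (simp add: algebra_simps)
    ultimately show ?thesis by simp
  qed
  have r1: "P1 * s = P1' * (-w)"
  proof -
    have "P1 * (- M - K - 1/2 - 1) = pochhammer (- M - K - 1/2 - 1) n * (- M - K - 1/2 - 1 + N)"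
      using poch_sh1[of "- M - K - 1/2" n] unfolding P1_def N_def .
    moreover have "- M - K - 1/2 - 1 = - M - K - 3/2" by simp
    moreover have "- M - K - 3/2 = -(s/2)" unfolding s_def L_def by (simp add: field_simps)
    moreover have "- M - K - 3/2 + N = w/2" unfolding w_def L_def by (simp add: field_simps)
    ultimately have h: "P1 * (-(s/2)) = P1' * (w/2)" unfolding P1'_def by simp
    have "P1 * s = -2 * (P1 * (-(s/2)))" by simp
    also have "\<dots> = -2 * (P1' * (w/2))" using h by simp
    also have "\<dots> = P1' * (-w)" by simp
    finally show ?thesis .
  qed
  have r2: "Q1 * (s*(2*l1)) = Q1' * (p*q)"
  proof -
    have "Q1 * ((- 2 * M - 2 * K - 1 - 2) * (- 2 * M - 2 * K - 1 - 1)) =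
       pochhammer (- 2 * M - 2 * K - 1 - 2) n * ((- 2 * M - 2 * K - 1 - 2 + N) * (- 2 * M - 2 * K - 1 - 1 + N))"
      using poch_sh2[of "- 2 * M - 2 * K - 1" n] unfolding Q1_def N_def .
    moreover have "- 2 * M - 2 * K - 1 - 2 = - 2 * M - 2 * K - 3" by simp
    moreover have "(- 2 * M - 2 * K - 3) * (- 2 * M - 2 * K - 1 - 1) = s*(2*l1)"
      unfolding s_def l1_def L_def by (simp add: algebra_simps)
    moreover have "(- 2 * M - 2 * K - 3 + N) * (- 2 * M - 2 * K - 1 - 1 + N) = p*q"
      unfolding p_def q_def L_def by (simp add: algebra_simps)
    ultimately show ?thesis unfolding Q1'_def by simp
  qed
  have r3: "Q2 * y = Q2' * (-z)"
  proof -
    have "Q2 * (x - M - 1) = Q2' * (x - M - 1 + N)"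
      using poch_sh1[of "x - M" n] unfolding Q2_def Q2'_def N_def .
    moreover have "x - M - 1 = -y" unfolding y_def by simp
    moreover have "x - M - 1 + N = z" unfolding z_def y_def by simp
    ultimately have h: "Q2 * (-y) = Q2' * z" by simp
    have "Q2 * y = - (Q2 * (-y))" by simp
    also have "\<dots> = - (Q2' * z)" using h by simp
    also have "\<dots> = Q2' * (-z)" by simp
    finally show ?thesis .
  qed
  have ii: "W0 * (m1*m2*p*q*z) = T * (nu*nv*w*l1*y)"
    unfolding W0 T by (rule ratio_ii[OF Q1'nz Q2'nz Fnz mNZ(1-4) ynz pnz qnz znz r0 r1 r2 r3])
  have i: "W1 * (2*p*z*(N+1)) = T * (nu*w*(b+N))"
    unfolding W1 T by (rule ratio_i[OF pnz znz mNZ(5)])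
  have AAe: "AA k b m = y*l1"
    unfolding AA_def y_def x_def l1_def L_def M_def K_def by (simp add: field_simps)
  have BBe: "BB k b m = m2*(2*x+2*L+1)/4"
    unfolding BB_def m2_def x_def L_def M_def K_def by (simp add: field_simps)
  have R0e: "RR k b m n * (2*m1*p) = -N*(y*l1)*(2*N-4*M-2*K-5)"
  proof -
    have "RR k b m n = -N*(y*l1)*(2*N-4*M-2*K-5) / (2*m1*p)"
      unfolding RR_def AAe unfolding N_def M_def K_def m1_def p_def L_def by simp
    thus ?thesis using mNZ pnz by simp
  qed
  have R1e: "RR k b m (Suc n) * (2*m1*q) = -(N+1)*(y*l1)*(2*N-4*M-2*K-3)"
  proof -
    have e: "(of_nat (Suc n)::complex) = N + 1" unfolding N_def by simp
    have "RR k b m (Suc n) = -(N+1)*(y*l1)*(2*(N+1)-4*M-2*K-5) / (2*m1*((N+1) - 2*(M+K) - 3))"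
      unfolding RR_def AAe e unfolding M_def K_def m1_def by simp
    also have "(N+1) - 2*(M+K) - 3 = q" unfolding q_def L_def by simp
    also have "2*(N+1)-4*M-2*K-5 = 2*N-4*M-2*K-3" by simp
    finally show ?thesis using mNZ qnz by simp
  qed
  define C D X0 X1 X2 X3 where "C = y*l1" and "D = 4*m1*p*q*z" and "X0 = 4*m1*p*q*z"
    and "X1 = (2*x+2*L+1)*nu*nv*w" and "X2 = -(2*N-4*M-2*K-3)*nu*w*(b+N)"
    and "X3 = -2*N*(2*N-4*M-2*K-5)*q*z"
  have Dnz: "D \<noteq> 0" unfolding D_def using mNZ pnz qnz znz by simp
  have h2: "BB k b m * W0 * D = C * X1 * T"
  proof -
    have "BB k b m * W0 * D = (2*x+2*L+1) * (W0 * (m1*m2*p*q*z))" unfolding BBe D_def by (simp add: field_simps)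
    also have "\<dots> = C * X1 * T" unfolding ii C_def X1_def by (simp add: algebra_simps)
    finally show ?thesis .
  qed
  have h3: "RR k b m (Suc n) * W1 * D = C * X2 * T"
  proof -
    have "RR k b m (Suc n) * W1 * D * (N+1) = (RR k b m (Suc n) * (2*m1*q)) * (W1 * (2*p*z*(N+1)))"
      unfolding D_def by (simp add: algebra_simps)
    also have "\<dots> = C * X2 * T * (N+1)" unfolding R1e i C_def X2_def by (simp add: algebra_simps)
    finally show ?thesis using mNZ(5) by simp
  qed
  have h4: "RR k b m n * T * D = C * X3 * T"
  proof -
    have "RR k b m n * T * D = (RR k b m n * (2*m1*p)) * (2*q*z) * T"
      unfolding D_def by (simp add: algebra_simps)
    also have "\<dots> = C * X3 * T" unfolding R0e C_def X3_def by (simp add: algebra_simps)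
    finally show ?thesis .
  qed
  have h5: "AA k b m * D = C * X0" unfolding AAe C_def D_def X0_def ..
  have bx: "b = 2*x - 1" unfolding x_def by (simp add: field_simps)
  have yx: "y = M + 1 - x" unfolding y_def ..
  have h6: "X0 - X1 = X2 - X3"
    unfolding X0_def X1_def X2_def X3_def m1_def p_def q_def z_def nu_def nv_def w_def L_def
    using bx yx by algebra
  have "AA k b m * T - BB k b m * W0 = RR k b m (Suc n) * W1 - RR k b m n * T"
    by (rule combine[OF Dnz h2 h3 h4 h5 h6])
  thus ?thesis unfolding T_def W0_def W1_def .
qed

definition wr :: "nat \<Rightarrow> complex \<Rightarrow> nat \<Rightarrow> complex" where
  "wr k b m = pochhammer (1/2) m * pochhammer ((2 + b + 2 * of_nat k) / 2) m /
      (pochhammer ((1 - b) / 2) m * pochhammer (1 + of_nat k) m)"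

lemma frac4: "(a*P1*(c*P2))/((d*Q1)*(e*Q2)) = P1*P2/(Q1*Q2) * (a*c/(d*e::complex))"
  by (simp only: times_divide_times_eq mult_ac)

lemma wr_Suc: "wr k b (Suc m) = wr k b m * (BB k b m / AA k b m)"
proof -
  have e: "(2 + b + 2 * of_nat k) / 2 + of_nat m = b/2 + 1 + of_nat k + (of_nat m :: complex)"
    by (simp add: field_simps)
  have "wr k b (Suc m) = ((1/2 + of_nat m) * pochhammer (1/2) m * ((b/2 + 1 + of_nat k + of_nat m) * pochhammer ((2 + b + 2 * of_nat k) / 2) m)) /
      ((((1 - b) / 2 + of_nat m) * pochhammer ((1 - b) / 2) m) * ((1 + of_nat k + of_nat m) * pochhammer (1 + of_nat k) m))"
    unfolding wr_def pochhammer_rec' e[symmetric] by (simp only: mult_ac)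
  also have "\<dots> = wr k b m * (BB k b m / AA k b m)"
    unfolding frac4 wr_def AA_def BB_def ..
  finally show ?thesis .
qed

lemma watson:
  assumes k: "k \<ge> 1" and hx: "(1+b)/2 - of_nat m \<notin> \<int>\<^sub>\<le>\<^sub>0"
  shows "(\<Sum>n\<le>2*m. wt k b m n) = wr k b m"
  using hx
proof (induction m)
  case 0
  show ?case by (simp add: wt_def wr_def)
next
  case (Suc m)
  have hx: "(1+b)/2 - of_nat (Suc m) \<notin> \<int>\<^sub>\<le>\<^sub>0" by fact
  have hxm: "(1+b)/2 - of_nat m \<notin> \<int>\<^sub>\<le>\<^sub>0"
  proof
    assume "(1+b)/2 - of_nat m \<in> \<int>\<^sub>\<le>\<^sub>0"
    hence "(1+b)/2 - of_nat m - 1 \<in> \<int>\<^sub>\<le>\<^sub>0" by (rule nonpos_Ints_diff_Nats) simp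
    with hx show False by (simp add: algebra_simps)
  qed
  have IH: "(\<Sum>n\<le>2*m. wt k b m n) = wr k b m" using Suc.IH[OF hxm] .
  define G where "G n = RR k b m n * wt k b (Suc m) n" for n
  have "(\<Sum>n<2*m+3. AA k b m * wt k b (Suc m) n - BB k b m * wt k b m n) = (\<Sum>n<2*m+3. G (Suc n) - G n)"
    unfolding G_def by (rule sum.cong) (auto intro!: wz_point k hx)
  also have "\<dots> = G (2*m+3) - G 0" by (rule sum_lessThan_telescope)
  also have "G 0 = 0" unfolding G_def RR_def by simp
  also have "G (2*m+3) = 0" unfolding G_def by (simp add: wt_zero)
  finally have tel: "(\<Sum>n<2*m+3. AA k b m * wt k b (Suc m) n - BB k b m * wt k b m n) = 0" by simp
  have s1: "(\<Sum>n<2*m+3. wt k b (Suc m) n) = (\<Sum>n\<le>2*Suc m. wt k b (Suc m) n)"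
    by (rule sum.cong) auto
  have s2: "(\<Sum>n<2*m+3. wt k b m n) = (\<Sum>n\<le>2*m. wt k b m n)"
  proof -
    have "(\<Sum>n<2*m+3. wt k b m n) = (\<Sum>n<Suc (2*m). wt k b m n) + wt k b m (2*m+1) + wt k b m (2*m+2)"
      by (simp add: numeral_3_eq_3)
    also have "wt k b m (2*m+1) = 0" by (simp add: wt_zero)
    also have "wt k b m (2*m+2) = 0" by (simp add: wt_zero)
    finally show ?thesis by (simp add: lessThan_Suc_atMost)
  qed
  have "AA k b m * (\<Sum>n\<le>2*Suc m. wt k b (Suc m) n) - BB k b m * (\<Sum>n\<le>2*m. wt k b m n) = 0"
    using tel unfolding sum_subtractf sum_distrib_left[symmetric] s1 s2 .
  hence eq: "AA k b m * (\<Sum>n\<le>2*Suc m. wt k b (Suc m) n) = BB k b m * wr k b m" unfolding IH by simp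
  have AAnz: "AA k b m \<noteq> 0"
  proof -
    have "(1 - b)/2 + of_nat m \<noteq> 0"
    proof
      assume "(1 - b)/2 + of_nat m = 0"
      hence h0: "(1+b)/2 - of_nat (Suc m) = 0" by (simp add: field_simps)
      show False using hx unfolding h0 by simp
    qed
    moreover have "1 + of_nat k + of_nat m \<noteq> (0::complex)"
    proof -
      have "1 + of_nat k + of_nat m = (of_nat (Suc (k+m)) :: complex)" by simp
      thus ?thesis by (metis of_nat_eq_0_iff nat.distinct(1))
    qed
    ultimately show ?thesis unfolding AA_def by simp
  qed
  from eq AAnz have "(\<Sum>n\<le>2*Suc m. wt k b (Suc m) n) = BB k b m * wr k b m / AA k b m"
    by (simp add: field_simps)
  also have "\<dots> = wr k b (Suc m)" unfolding wr_Suc by simp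
  finally show ?case .
qed



lemma gamma_real_scale:
  fixes z :: complex and r :: real
  assumes z: "Re z > 0" and r: "r > 0"
  shows "((\<lambda>t. of_real t powr (z - 1) * exp (- of_real r * of_real t)) has_integral Gamma z / of_real r powr z) {0<..}"
proof -
  define f :: "real \<Rightarrow> complex" where "f = (\<lambda>t. of_real t powr (z - 1) / of_real (exp t))"
  have ai: "set_integrable lebesgue {0<..} f"
    using absolutely_integrable_Gamma_integral'[OF z] unfolding f_def .
  have hi: "(f has_integral Gamma z) {0<..}" unfolding f_def by (rule Gamma_integral_complex'[OF z])
  have "(LINT x:{0<..}|lebesgue. f x) = Gamma z"
    using set_lebesgue_integral_eq_integral(2)[OF ai] integral_unique[OF hi] by simp
  hence hb: "has_bochner_integral lebesgue (\<lambda>x. indicator {0<..} x *\<^sub>R f x) (Gamma z)"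
    using ai unfolding set_integrable_def set_lebesgue_integral_def has_bochner_integral_iff by simp
  have "has_bochner_integral lebesgue (\<lambda>x. indicator {0<..} (0 + r * x) *\<^sub>R f (0 + r * x)) (Gamma z /\<^sub>R \<bar>r\<bar>)"
    using hb has_bochner_integral_lebesgue_real_affine_iff[of r "\<lambda>x. indicator {0<..} x *\<^sub>R f x" "Gamma z" 0] r
    by simp
  moreover have "(\<lambda>x. indicator {0<..} (0 + r * x) *\<^sub>R f (0 + r * x)) = (\<lambda>x. indicator {0<..} x *\<^sub>R f (r * x))"
    using r by (auto simp: indicator_def zero_less_mult_iff fun_eq_iff)
  ultimately have hb2: "has_bochner_integral lebesgue (\<lambda>x. indicator {0<..} x *\<^sub>R f (r * x)) (Gamma z /\<^sub>R r)"
    using r by simp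
  have "((\<lambda>x. indicator {0<..} x *\<^sub>R f (r * x)) has_integral (Gamma z /\<^sub>R r)) UNIV"
    using has_integral_integral_lebesgue[of "\<lambda>x. indicator {0<..} x *\<^sub>R f (r * x)"] hb2
    unfolding has_bochner_integral_iff by simp
  hence "((\<lambda>x. if x \<in> {0<..} then f (r * x) else 0) has_integral (Gamma z /\<^sub>R r)) UNIV"
  proof -
    have "(\<lambda>x. indicator {0<..} x *\<^sub>R f (r * x)) = (\<lambda>x. if x \<in> {0<..} then f (r * x) else 0)"
      by (auto simp: indicator_def fun_eq_iff)
    thus "((\<lambda>x. indicator {0<..} x *\<^sub>R f (r * x)) has_integral (Gamma z /\<^sub>R r)) UNIV \<Longrightarrow> ?thesis" by simp
  qed
  hence "((\<lambda>x. f (r * x)) has_integral (Gamma z /\<^sub>R r)) {0<..}"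
    using has_integral_restrict[of "{0<..}" UNIV "\<lambda>x. f (r * x)"] by simp
  hence "((\<lambda>x. f (r * x) * inverse (of_real r powr (z - 1))) has_integral (Gamma z /\<^sub>R r * inverse (of_real r powr (z - 1)))) {0<..}"
    by (rule has_integral_mult_left)
  moreover have "Gamma z /\<^sub>R r * inverse (of_real r powr (z - 1)) = Gamma z / of_real r powr z"
  proof -
    have "of_real r powr z = of_real r powr (z - 1) * of_real r powr 1"
      by (subst powr_add[symmetric]) simp
    thus ?thesis using r by (simp add: scaleR_conv_of_real field_simps)
  qed
  moreover have "f (r * x) * inverse (of_real r powr (z - 1)) = of_real x powr (z - 1) * exp (- of_real r * of_real x)"
    if x: "x \<in> {0<..}" for x
  proof -
    have "of_real (r * x) powr (z - 1) = of_real r powr (z - 1) * of_real x powr (z - 1)"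
      using r x by (subst of_real_mult, subst powr_times_real) auto
    moreover have "of_real (exp (r * x)) = exp (of_real r * of_real x :: complex)"
      by (metis exp_of_real of_real_mult)
    moreover have "of_real r powr (z - 1) \<noteq> 0" using r by simp
    ultimately show ?thesis unfolding f_def by (simp add: field_simps exp_minus)
  qed
  ultimately show ?thesis
    by (subst has_integral_cong[symmetric]) auto
qed

lemma mu_disc:
  fixes \<mu> :: complex
  assumes mu: "Re \<mu> > 0"
  defines "r \<equiv> (cmod \<mu>)^2 / Re \<mu>"
  shows "r > 0" "cmod (of_real r - \<mu>) < r"
proof -
  have nz: "\<mu> \<noteq> 0" using mu by auto
  hence "cmod \<mu> > 0" by simp
  thus "r > 0" unfolding r_def using mu by simp
  have "(cmod (of_real r - \<mu>))^2 = (r - Re \<mu>)^2 + (Im \<mu>)^2"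
    by (simp add: cmod_power2)
  also have "\<dots> = r^2 - 2 * r * Re \<mu> + ((Re \<mu>)^2 + (Im \<mu>)^2)" by (simp add: power2_eq_square algebra_simps)
  also have "(Re \<mu>)^2 + (Im \<mu>)^2 = (cmod \<mu>)^2" by (simp add: cmod_power2)
  also have "2 * r * Re \<mu> = 2 * (cmod \<mu>)^2" unfolding r_def using mu by simp
  finally have "(cmod (of_real r - \<mu>))^2 = r^2 - (cmod \<mu>)^2" by simp
  also have "\<dots> < r^2" using \<open>cmod \<mu> > 0\<close> by simp
  finally have "(cmod (of_real r - \<mu>))^2 < r^2" .
  thus "cmod (of_real r - \<mu>) < r" by (rule power2_less_imp_less) (use \<open>r > 0\<close> in simp)
qed

lemma gamma_complex_scale:
  fixes z \<mu> :: complex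
  assumes z: "Re z > 0" and mu: "Re \<mu> > 0"
  shows "((\<lambda>t. of_real t powr (z - 1) * exp (- \<mu> * of_real t)) has_integral Gamma z / \<mu> powr z) {0<..}"
proof -
  define r where "r = (cmod \<mu>)^2 / Re \<mu>"
  have r: "r > 0" and wr: "cmod (of_real r - \<mu>) < r" using mu_disc[OF mu] unfolding r_def by auto
  define w where "w = of_real r - \<mu>"
  have wr': "cmod w < r" unfolding w_def by (rule wr)
  define \<rho> where "\<rho> = r - cmod w"
  have \<rho>: "\<rho> > 0" unfolding \<rho>_def using wr' by simp
  define F where "F N t = (\<Sum>j<N. of_real t powr (z - 1) * exp (- of_real r * of_real t) * ((w * of_real t)^j / fact j))" for N t
  define I where "I N = (\<Sum>j<N. w^j / fact j * (Gamma (z + of_nat j) / of_real r powr (z + of_nat j)))" for N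
  have hF: "(F N has_integral I N) {0<..}" for N
    unfolding F_def I_def
  proof (rule has_integral_sum, simp, goal_cases)
    case (1 j)
    have "Re (z + of_nat j) > 0" using z by simp
    from has_integral_mult_right[OF gamma_real_scale[OF this r], of "w^j / fact j"]
    have h: "((\<lambda>t. w ^ j / fact j * (of_real t powr (z + of_nat j - 1) * exp (- of_real r * of_real t))) has_integral
        w ^ j / fact j * (Gamma (z + of_nat j) / of_real r powr (z + of_nat j))) {0<..}" .
    show ?case
    proof (rule has_integral_eq[OF _ h])
      fix t :: real assume t: "t \<in> {0<..}"
      have "of_real t powr (z + of_nat j - 1) = of_real t powr (z - 1) * of_real t powr (of_nat j)"
        by (subst powr_add[symmetric]) (simp add: algebra_simps)
      also have "(of_real t :: complex) powr (of_nat j) = of_real t ^ j" using t by (simp add: powr_nat')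
      finally show "w ^ j / fact j * (of_real t powr (z + of_nat j - 1) * exp (- of_real r * of_real t)) =
          of_real t powr (z - 1) * exp (- of_real r * of_real t) * ((w * of_real t)^j / fact j)"
        by (simp add: power_mult_distrib field_simps)
    qed
  qed
  define h where "h t = norm (of_real t powr (of_real (Re z) - 1) / of_real (exp (\<rho> * t)) :: complex)" for t :: real
  have hint: "h integrable_on {0<..}"
  proof -
    have "Re (of_real (Re z) :: complex) > 0" using z by simp
    from absolutely_integrable_Gamma_integral[OF this \<rho>]
    show ?thesis unfolding h_def absolutely_integrable_on_def by blast
  qed
  have hbound: "\<forall>t\<in>{0<..}. norm (F N t) \<le> h t" for N
  proof
    fix t :: real assume t: "t \<in> {0<..}"
    hence t0: "t > 0" by simp
    have n1: "norm (of_real t powr (z - 1) :: complex) = t powr (Re z - 1)"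
      using t0 by (subst norm_powr_real_powr) auto
    have n2: "norm (exp (- of_real r * of_real t) :: complex) = exp (- r * t)"
      by (metis exp_of_real norm_of_real abs_exp_cancel of_real_minus of_real_mult)
    have "norm (F N t) \<le> (\<Sum>j<N. norm (of_real t powr (z - 1) * exp (- of_real r * of_real t) * ((w * of_real t)^j / fact j)))"
      unfolding F_def by (rule norm_sum)
    also have "\<dots> = (\<Sum>j<N. t powr (Re z - 1) * exp (- r * t) * ((cmod w * t)^j / fact j))"
      using t0 by (intro sum.cong refl) (simp add: norm_mult norm_divide norm_power n1 n2 norm_fact)
    also have "\<dots> = t powr (Re z - 1) * exp (- r * t) * (\<Sum>j<N. (cmod w * t)^j / fact j)"
      by (simp add: sum_distrib_left)
    also have "(\<Sum>j<N. (cmod w * t)^j / fact j) \<le> exp (cmod w * t)"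
    proof -
      have "(\<lambda>j. (cmod w * t)^j /\<^sub>R fact j) sums exp (cmod w * t)" by (rule exp_converges)
      hence s: "(\<lambda>j. (cmod w * t)^j / fact j) sums exp (cmod w * t)" by (simp add: divide_inverse_commute)
      have "(\<Sum>j<N. (cmod w * t)^j / fact j) \<le> (\<Sum>j. (cmod w * t)^j / fact j)"
        by (rule sum_le_suminf) (use s t0 in \<open>auto simp: sums_iff\<close>)
      thus ?thesis using s by (simp add: sums_iff)
    qed
    hence "t powr (Re z - 1) * exp (- r * t) * (\<Sum>j<N. (cmod w * t)^j / fact j) \<le> t powr (Re z - 1) * exp (- r * t) * exp (cmod w * t)"
      by (intro mult_left_mono) auto
    also have "\<dots> = h t"
    proof -
      have "t powr (Re z - 1) * exp (- r * t) * exp (cmod w * t) = t powr (Re z - 1) / exp (\<rho> * t)"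
        unfolding \<rho>_def by (simp add: exp_add[symmetric] exp_minus field_simps exp_diff)
      also have "\<dots> = h t" unfolding h_def using t0
        by (simp add: norm_divide norm_powr_real_powr)
      finally show ?thesis .
    qed
    finally show "norm (F N t) \<le> h t" .
  qed
  have hconv: "\<forall>t\<in>{0<..}. (\<lambda>N. F N t) \<longlonglongrightarrow> of_real t powr (z - 1) * exp (- \<mu> * of_real t)"
  proof
    fix t :: real assume t: "t \<in> {0<..}"
    have "(\<lambda>j. (w * of_real t)^j /\<^sub>R fact j) sums exp (w * of_real t)" by (rule exp_converges)
    hence "(\<lambda>j. (w * of_real t)^j / fact j) sums exp (w * of_real t)"
      by (simp add: scaleR_conv_of_real divide_inverse_commute)
    hence "(\<lambda>j. of_real t powr (z - 1) * exp (- of_real r * of_real t) * ((w * of_real t)^j / fact j)) sums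
           (of_real t powr (z - 1) * exp (- of_real r * of_real t) * exp (w * of_real t))"
      by (rule sums_mult)
    also have "of_real t powr (z - 1) * exp (- of_real r * of_real t) * exp (w * of_real t) = of_real t powr (z - 1) * exp (- \<mu> * of_real t)"
      unfolding w_def by (simp add: exp_add[symmetric] algebra_simps)
    finally show "(\<lambda>N. F N t) \<longlonglongrightarrow> of_real t powr (z - 1) * exp (- \<mu> * of_real t)"
      unfolding F_def sums_def .
  qed
  have Ilim: "I \<longlonglongrightarrow> Gamma z / \<mu> powr z"
  proof -
    have zn: "z \<notin> \<int>\<^sub>\<le>\<^sub>0" using z by (auto elim!: nonpos_Ints_cases)
    have rnz: "(of_real r :: complex) \<noteq> 0" using r by simp
    have nw: "norm (- (w / of_real r)) < 1" using wr' r by (simp add: norm_divide field_simps)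
    from gen_binomial_complex[OF nw, of "-z"]
    have "(\<lambda>j. (- z gchoose j) * (- (w / of_real r)) ^ j) sums (1 + - (w / of_real r)) powr (- z)" .
    hence "(\<lambda>j. Gamma z / of_real r powr z * ((- z gchoose j) * (- (w / of_real r)) ^ j)) sums
        (Gamma z / of_real r powr z * (1 + - (w / of_real r)) powr (- z))"
      by (rule sums_mult)
    also have "Gamma z / of_real r powr z * (1 + - (w / of_real r)) powr (- z) = Gamma z / \<mu> powr z"
    proof -
      have e1: "1 + - (w / of_real r) = \<mu> / of_real r" unfolding w_def using rnz by (simp add: field_simps)
      have "\<mu> powr (- z) = of_real r powr (- z) * (\<mu> / of_real r) powr (- z)"
      proof -
        have "\<mu> = of_real r * (\<mu> / of_real r)" using rnz by simp
        hence "\<mu> powr (- z) = (of_real r * (\<mu> / of_real r)) powr (- z)" by simp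
        also have "\<dots> = of_real r powr (- z) * (\<mu> / of_real r) powr (- z)"
          using r by (intro powr_times_real_left) auto
        finally show ?thesis .
      qed
      moreover have "of_real r powr z \<noteq> 0" using rnz by simp
      moreover have "(\<mu> / of_real r) powr z \<noteq> 0" using rnz mu by auto
      ultimately show ?thesis unfolding e1 by (simp add: powr_minus field_simps)
    qed
    also have "(\<lambda>j. Gamma z / of_real r powr z * ((- z gchoose j) * (- (w / of_real r)) ^ j)) =
       (\<lambda>j. w^j / fact j * (Gamma (z + of_nat j) / of_real r powr (z + of_nat j)))"
    proof
      fix j
      have G: "Gamma (z + of_nat j) = Gamma z * pochhammer z j"
        using pochhammer_Gamma[OF zn, of j] Gamma_nonzero[OF zn] by (simp add: field_simps)
      have P: "(of_real r :: complex) powr (z + of_nat j) = of_real r powr z * of_real r ^ j"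
        using rnz by (simp add: powr_add powr_nat')
      have B: "(- z gchoose j) = (-1)^j * pochhammer z j / fact j"
        by (simp add: gbinomial_pochhammer)
      have "(- (w / of_real r)) ^ j = (-1)^j * w^j / of_real r ^ j"
        by (simp add: power_minus' power_divide)
      hence "(- z gchoose j) * (- (w / of_real r)) ^ j = ((-1)^j * (-1)^j) * pochhammer z j * w^j / (fact j * of_real r ^ j)"
        unfolding B by (simp add: field_simps)
      also have "(-1::complex)^j * (-1)^j = 1" by (simp add: power_mult_distrib[symmetric])
      finally show "Gamma z / of_real r powr z * ((- z gchoose j) * (- (w / of_real r)) ^ j) =
          w^j / fact j * (Gamma (z + of_nat j) / of_real r powr (z + of_nat j))"
        unfolding G P using rnz by (simp add: field_simps)
    qed
    finally show ?thesis unfolding I_def sums_def .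
  qed
  show ?thesis
    by (rule has_integral_dominated_convergence[OF hF hint hbound hconv Ilim])
qed


theorem mainTheorem17:
  fixes m k :: nat and \<beta> \<mu> :: complex
  assumes "m \<ge> 1" and "k \<ge> 1"
    and "(1 + \<beta>) / 2 - of_nat m \<notin> \<int>\<^sub>\<le>\<^sub>0"
    and "Re \<beta> > 0" and "Re \<mu> > 0"
  shows "((\<lambda>t::real. of_real t powr (\<beta> - 1) * exp (- \<mu> * of_real t) *
            hyp2F2_trunc (- 2 * of_nat m) (- of_nat m - of_nat k - 1/2)
                         (- 2 * of_nat m - 2 * of_nat k - 1) ((1 + \<beta>) / 2 - of_nat m)
                         (\<mu> * of_real t) (2 * m))
          has_integral
          (Gamma \<beta> / \<mu> powr \<beta> *
            (pochhammer (1/2) m * pochhammer ((2 + \<beta> + 2 * of_nat k) / 2) m) /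
            (pochhammer ((1 - \<beta>) / 2) m * pochhammer (1 + of_nat k) m))) {0<..}"
proof -
  note k = assms(2) and hx = assms(3) and bpos = assms(4) and mupos = assms(5)
  define c where "c n = pochhammer (- 2 * of_nat m) n * pochhammer (- of_nat m - of_nat k - 1/2) n /
      (pochhammer (- 2 * of_nat m - 2 * of_nat k - 1) n * pochhammer ((1 + \<beta>) / 2 - of_nat m) n)" for n
  have mu0: "\<mu> \<noteq> 0" using mupos by auto
  have bn: "\<beta> \<notin> \<int>\<^sub>\<le>\<^sub>0" using bpos by (auto elim!: nonpos_Ints_cases)
  have each: "((\<lambda>t. c n * \<mu>^n / of_nat (fact n) * (of_real t powr (\<beta> + of_nat n - 1) * exp (- \<mu> * of_real t)))
     has_integral (c n * \<mu>^n / of_nat (fact n) * (Gamma (\<beta> + of_nat n) / \<mu> powr (\<beta> + of_nat n)))) {0<..}" for n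
  proof -
    have "Re (\<beta> + of_nat n) > 0" using bpos by simp
    from has_integral_mult_right[OF gamma_complex_scale[OF this mupos], of "c n * \<mu>^n / of_nat (fact n)"]
    show ?thesis .
  qed
  have sumI: "((\<lambda>t. \<Sum>n\<le>2*m. c n * \<mu>^n / of_nat (fact n) * (of_real t powr (\<beta> + of_nat n - 1) * exp (- \<mu> * of_real t)))
     has_integral (\<Sum>n\<le>2*m. c n * \<mu>^n / of_nat (fact n) * (Gamma (\<beta> + of_nat n) / \<mu> powr (\<beta> + of_nat n)))) {0<..}"
    by (rule has_integral_sum[OF finite_atMost each])
  have val: "(\<Sum>n\<le>2*m. c n * \<mu>^n / of_nat (fact n) * (Gamma (\<beta> + of_nat n) / \<mu> powr (\<beta> + of_nat n)))
      = Gamma \<beta> / \<mu> powr \<beta> * (\<Sum>n\<le>2*m. wt k \<beta> m n)"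
    unfolding sum_distrib_left
  proof (rule sum.cong[OF refl])
    fix n
    have G: "Gamma (\<beta> + of_nat n) = Gamma \<beta> * pochhammer \<beta> n"
      using pochhammer_Gamma[OF bn, of n] Gamma_nonzero[OF bn] by (simp add: field_simps)
    have P: "\<mu> powr (\<beta> + of_nat n) = \<mu> powr \<beta> * \<mu> ^ n"
      using mu0 by (simp add: powr_add powr_nat')
    have "\<mu> powr \<beta> \<noteq> 0" using mu0 by simp
    thus "c n * \<mu>^n / of_nat (fact n) * (Gamma (\<beta> + of_nat n) / \<mu> powr (\<beta> + of_nat n)) = Gamma \<beta> / \<mu> powr \<beta> * wt k \<beta> m n"
      unfolding G P c_def wt_def using mu0 by (simp add: field_simps)
  qed
  have "(\<Sum>n\<le>2*m. wt k \<beta> m n) = wr k \<beta> m" by (rule watson[OF k hx])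
  hence val2: "(\<Sum>n\<le>2*m. c n * \<mu>^n / of_nat (fact n) * (Gamma (\<beta> + of_nat n) / \<mu> powr (\<beta> + of_nat n)))
      = Gamma \<beta> / \<mu> powr \<beta> *
            (pochhammer (1/2) m * pochhammer ((2 + \<beta> + 2 * of_nat k) / 2) m) /
            (pochhammer ((1 - \<beta>) / 2) m * pochhammer (1 + of_nat k) m)"
    unfolding val wr_def by simp
  show ?thesis
    unfolding val2[symmetric]
  proof (rule has_integral_eq[OF _ sumI])
    fix t :: real assume t: "t \<in> {0<..}"
    have pw: "of_real t powr (\<beta> + of_nat n - 1) = of_real t powr (\<beta> - 1) * of_real t ^ n" for n
    proof -
      have "of_real t powr (\<beta> + of_nat n - 1) = of_real t powr (\<beta> - 1) * of_real t powr (of_nat n)"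
        by (subst powr_add[symmetric]) (simp add: algebra_simps)
      also have "(of_real t :: complex) powr (of_nat n) = of_real t ^ n" using t by (simp add: powr_nat')
      finally show ?thesis .
    qed
    show "(\<Sum>n\<le>2*m. c n * \<mu>^n / of_nat (fact n) * (of_real t powr (\<beta> + of_nat n - 1) * exp (- \<mu> * of_real t))) =
       of_real t powr (\<beta> - 1) * exp (- \<mu> * of_real t) *
            hyp2F2_trunc (- 2 * of_nat m) (- of_nat m - of_nat k - 1/2)
                         (- 2 * of_nat m - 2 * of_nat k - 1) ((1 + \<beta>) / 2 - of_nat m)
                         (\<mu> * of_real t) (2 * m)"
      unfolding hyp2F2_trunc_def sum_distrib_left
      by (rule sum.cong[OF refl]) (simp add: pw c_def power_mult_distrib field_simps)
  qed
qed

end
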